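(* The $\lambda j$-calculus enjoys PSN: every $\lambda$-term that is $\beta$-strongly normalizing is $\lambda j$-strongly normalizing.
   Context: $\lambda j$-terms are generated by $t,u::= x\mid \lambda x.t\mid t\,u\mid t[x/u]$ ($x$ ranging over variables); $\lambda x.t$ and $t[x/u]$ bind $x$ in $t$ (not in $u$), and terms are considered modulo $\alpha$-conversion. $\lambda$-terms are $\lambda j$-terms without jumps $[x/u]$. $\mathrm{fv}(t)$ is the set of free variables, $t\{x/u\}$ is capture-avoiding meta-level substitution, and $|t|_x$ is the number of free occurrences of $x$ in $t$. If $|t|_x=n\ge2$, $t_{[y]_x}$ denotes any term obtained from $t$ by replacing $k$ of the free occurrences of $x$ by a fresh variable $y$, for some $1\le k\le n-1$. ${\tt L}$ denotes a (possibly empty) list of jumps $[x_1/u_1]\dots[x_k/u_k]$. The rewriting rules, closed under all contexts, are: $({\tt dB})$ $(\lambda x.t){\tt L}\,u\to t[x/u]{\tt L}$ where no $x_i$ of ${\tt L}$ is free in $u$; $({\tt w})$ $t[x/u]\to t$ if $|t|_x=0$; $({\tt d})$ $t[x/u]\to t\{x/u\}$ if $|t|_x=1$; $({\tt c})$ $t[x/u]\to t_{[y]_x}[x/u][y/u]$ if $|t|_x\ge2$, $y$ fresh. $\to_{\lambda j}$ is the union of all four. $\beta$-reduction on $\lambda$-terms is the contextual closure of $(\lambda x.t)u\to_\beta t\{x/u\}$. A term is strongly normalizing for a relation if it has no infinite reduction sequence. *)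

theory Defs
  imports Main
begin

text \<open>lambda-j terms modulo alpha-conversion, represented with de Bruijn indices.
  Lam t binds index 0 in t; Sub t u represents the jump t[x/u] and binds index 0 in t
  (but not in u).\<close>

datatype trm = Var nat | Lam trm | App trm trm | Sub trm trm

fun is_lam :: "trm \<Rightarrow> bool" where
  "is_lam (Var i) = True"
| "is_lam (Lam t) = is_lam t"
| "is_lam (App t u) = (is_lam t \<and> is_lam u)"
| "is_lam (Sub t u) = False"

fun lift :: "nat \<Rightarrow> trm \<Rightarrow> trm" where
  "lift k (Var i) = (if i < k then Var i else Var (Suc i))"
| "lift k (Lam t) = Lam (lift (Suc k) t)"
| "lift k (App t u) = App (lift k t) (lift k u)"
| "lift k (Sub t u) = Sub (lift (Suc k) t) (lift k u)"

fun subst :: "trm \<Rightarrow> nat \<Rightarrow> trm \<Rightarrow> trm" where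
  "subst (Var i) k u = (if i < k then Var i else if i = k then u else Var (i - 1))"
| "subst (Lam t) k u = Lam (subst t (Suc k) (lift 0 u))"
| "subst (App t1 t2) k u = App (subst t1 k u) (subst t2 k u)"
| "subst (Sub t1 t2) k u = Sub (subst t1 (Suc k) (lift 0 u)) (subst t2 k u)"

fun occ :: "nat \<Rightarrow> trm \<Rightarrow> nat" where
  "occ k (Var i) = (if i = k then 1 else 0)"
| "occ k (Lam t) = occ (Suc k) t"
| "occ k (App t u) = occ k t + occ k u"
| "occ k (Sub t u) = occ (Suc k) t + occ k u"

text \<open>repl x y t t': t' is obtained from t by replacing some (any subset of the)
  free occurrences of index x by index y\<close>
inductive repl :: "nat \<Rightarrow> nat \<Rightarrow> trm \<Rightarrow> trm \<Rightarrow> bool" where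
  repl_keep: "repl x y (Var i) (Var i)"
| repl_swap: "repl x y (Var x) (Var y)"
| repl_lam: "repl (Suc x) (Suc y) t t' \<Longrightarrow> repl x y (Lam t) (Lam t')"
| repl_app: "repl x y a a' \<Longrightarrow> repl x y b b' \<Longrightarrow> repl x y (App a b) (App a' b')"
| repl_sub: "repl (Suc x) (Suc y) a a' \<Longrightarrow> repl x y b b' \<Longrightarrow> repl x y (Sub a b) (Sub a' b')"

text \<open>t L for a list of jumps L = [x1/u1]...[xk/uk] (given as [u1,...,uk])\<close>
fun wrap :: "trm \<Rightarrow> trm list \<Rightarrow> trm" where
  "wrap t [] = t"
| "wrap t (u # us) = wrap (Sub t u) us"

inductive lj :: "trm \<Rightarrow> trm \<Rightarrow> bool" where
  dB: "lj (App (wrap (Lam t) L) u) (wrap (Sub t ((lift 0 ^^ length L) u)) L)"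
| w: "occ 0 t = 0 \<Longrightarrow> lj (Sub t u) (subst t 0 u)"
| d: "occ 0 t = 1 \<Longrightarrow> lj (Sub t u) (subst t 0 u)"
| c: "occ 0 t \<ge> 2 \<Longrightarrow> repl 0 1 (lift 1 t) t' \<Longrightarrow> occ 0 t' \<ge> 1 \<Longrightarrow> occ 1 t' \<ge> 1
      \<Longrightarrow> lj (Sub t u) (Sub (Sub t' (lift 0 u)) u)"
| lam: "lj t t' \<Longrightarrow> lj (Lam t) (Lam t')"
| appL: "lj t t' \<Longrightarrow> lj (App t u) (App t' u)"
| appR: "lj u u' \<Longrightarrow> lj (App t u) (App t u')"
| subL: "lj t t' \<Longrightarrow> lj (Sub t u) (Sub t' u)"
| subR: "lj u u' \<Longrightarrow> lj (Sub t u) (Sub t u')"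

inductive beta :: "trm \<Rightarrow> trm \<Rightarrow> bool" where
  root: "beta (App (Lam t) u) (subst t 0 u)"
| lam: "beta t t' \<Longrightarrow> beta (Lam t) (Lam t')"
| appL: "beta t t' \<Longrightarrow> beta (App t u) (App t' u)"
| appR: "beta u u' \<Longrightarrow> beta (App t u) (App t u')"

definition SN :: "('a \<Rightarrow> 'a \<Rightarrow> bool) \<Rightarrow> 'a \<Rightarrow> bool" where
  "SN r t \<longleftrightarrow> \<not> (\<exists>f. f 0 = t \<and> (\<forall>i. r (f i) (f (Suc i))))"

end

theory Submission
  imports Defs "HOL-Library.Multiset"
begin


fun psubst :: "trm \<Rightarrow> (nat \<Rightarrow> trm) \<Rightarrow> trm" where
  "psubst (Var i) s = s i"
| "psubst (Lam t) s = Lam (psubst t (\<lambda>i. case i of 0 \<Rightarrow> Var 0 | Suc j \<Rightarrow> lift 0 (s j)))"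
| "psubst (App t u) s = App (psubst t s) (psubst u s)"
| "psubst (Sub t u) s = Sub (psubst t (\<lambda>i. case i of 0 \<Rightarrow> Var 0 | Suc j \<Rightarrow> lift 0 (s j))) (psubst u s)"

definition up :: "(nat \<Rightarrow> trm) \<Rightarrow> nat \<Rightarrow> trm" where
  "up s = (\<lambda>i. case i of 0 \<Rightarrow> Var 0 | Suc j \<Rightarrow> lift 0 (s j))"

lemma psubst_simps[simp]:
  "psubst (Lam t) s = Lam (psubst t (up s))"
  "psubst (Sub t u) s = Sub (psubst t (up s)) (psubst u s)"
  by (simp_all add: up_def)

declare psubst.simps(2,4)[simp del]

lemma up_0[simp]: "up s 0 = Var 0" and up_Suc[simp]: "up s (Suc j) = lift 0 (s j)"
  by (simp_all add: up_def)

lemma lift_psubst: "lift k t = psubst t (\<lambda>i. if i < k then Var i else Var (Suc i))"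
proof (induction t arbitrary: k)
  case (Lam t) show ?case
    by (simp add: Lam[of "Suc k"]) (rule arg_cong[where f="psubst t"], auto simp: fun_eq_iff up_def split: nat.split)
next
  case (Sub t u) show ?case
    by (simp add: Sub(1)[of "Suc k"] Sub(2)) (rule arg_cong[where f="psubst t"], auto simp: fun_eq_iff up_def split: nat.split)
qed auto

lemma up_ren: "up (\<lambda>i. Var (f i)) = (\<lambda>i. Var (case i of 0 \<Rightarrow> 0 | Suc j \<Rightarrow> Suc (f j)))"
  by (auto simp: fun_eq_iff up_def split: nat.split)

lemma psubst_ren_comp: "psubst (psubst t (\<lambda>i. Var (f i))) g = psubst t (\<lambda>i. g (f i))"
proof (induction t arbitrary: f g)
  case (Lam t) show ?case
    by (simp add: up_ren Lam) (rule arg_cong[where f="psubst t"], auto simp: fun_eq_iff up_def split: nat.split)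
next
  case (Sub t u) show ?case
    by (simp add: up_ren Sub) (rule arg_cong[where f="psubst t"], auto simp: fun_eq_iff up_def split: nat.split)
qed auto

lemma liftV_psubst: "lift k t = psubst t (\<lambda>i. Var (if i < k then i else Suc i))"
  by (simp add: lift_psubst if_distrib)

lemma lift0_psubst: "lift 0 t = psubst t (\<lambda>i. Var (Suc i))"
  by (simp add: lift_psubst)

lemma psubst_comp_ren: "psubst (psubst t s) (\<lambda>i. Var (f i)) = psubst t (\<lambda>i. psubst (s i) (\<lambda>i. Var (f i)))"
proof (induction t arbitrary: s f)
  case (Lam t) show ?case
    by (simp add: up_ren Lam) (rule arg_cong[where f="psubst t"], auto simp: fun_eq_iff up_def lift0_psubst psubst_ren_comp split: nat.split)
next
  case (Sub t u) show ?case
    by (simp add: up_ren Sub) (rule arg_cong[where f="psubst t"], auto simp: fun_eq_iff up_def lift0_psubst psubst_ren_comp split: nat.split)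
qed auto

lemma psubst_comp: "psubst (psubst t s) g = psubst t (\<lambda>i. psubst (s i) g)"
proof (induction t arbitrary: s g)
  case (Lam t) show ?case
    by (simp add: Lam) (rule arg_cong[where f="psubst t"], auto simp: fun_eq_iff up_def lift0_psubst psubst_ren_comp psubst_comp_ren split: nat.split)
next
  case (Sub t u) show ?case
    by (simp add: Sub) (rule arg_cong[where f="psubst t"], auto simp: fun_eq_iff up_def lift0_psubst psubst_ren_comp psubst_comp_ren split: nat.split)
qed auto

lemma psubst_Var[simp]: "psubst t Var = t"
proof (induction t)
  case (Lam t) then show ?case
    by (simp) (metis (no_types, lifting) ext lift.simps(1) not_less_zero nat.case_eq_if nat.collapse up_def)
next
  case (Sub t u) then show ?case
    by (simp) (metis (no_types, lifting) ext lift.simps(1) not_less_zero nat.case_eq_if nat.collapse up_def)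
qed auto

lemma subst_psubst: "subst t k u = psubst t (\<lambda>i. if i < k then Var i else if i = k then u else Var (i - 1))"
proof (induction t arbitrary: k u)
  case (Lam t) show ?case
    by (simp add: Lam[of "Suc k"]) (rule arg_cong[where f="psubst t"], auto simp: fun_eq_iff up_def split: nat.split)
next
  case (Sub t u) show ?case
    by (simp add: Sub(1)[of "Suc k"] Sub(2)) (rule arg_cong[where f="psubst t"], auto simp: fun_eq_iff up_def split: nat.split)
qed auto



lemma psubst_lift0_up: "psubst (lift 0 x) (up s) = lift 0 (psubst x s)"
  by (simp add: lift0_psubst psubst_ren_comp psubst_comp_ren)

lemma lift1_psubst_up: "lift (Suc 0) (psubst t (up s)) = psubst (lift (Suc 0) t) (up (up s))"
  by (simp add: liftV_psubst[of "Suc 0"] psubst_ren_comp psubst_comp_ren)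
     (rule arg_cong[where f="psubst t"], auto simp: fun_eq_iff up_def lift0_psubst psubst_ren_comp split: nat.split)

lemma subst0_psubst_up: "subst (psubst t (up s)) 0 (psubst a s) = psubst (subst t 0 a) s"
  by (simp add: subst_psubst psubst_comp)
     (rule arg_cong[where f="psubst t"], auto simp: fun_eq_iff up_def lift0_psubst psubst_ren_comp split: nat.split)

lemma occ_lift: "occ j (lift k t) = (if j < k then occ j t else if j = k then 0 else occ (j - 1) t)"
  by (induction t arbitrary: k j) auto

lemma occ_subst: "occ j (subst t k u) = (if j < k then occ j t else occ (Suc j) t) + occ k t * occ j u"
  by (induction t arbitrary: k u j) (auto simp: occ_lift algebra_simps)

lemma occ_liftpow: "occ j ((lift 0 ^^ n) u) = (if j < n then 0 else occ (j - n) u)"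
  by (induction n arbitrary: j) (auto simp: occ_lift)

lemma occ_psubst_low:
  "(\<forall>i<m. s i = Var i) \<Longrightarrow> (\<forall>i\<ge>m. \<forall>j<m. occ j (s i) = 0) \<Longrightarrow> j < m \<Longrightarrow> occ j (psubst t s) = occ j t"
proof (induction t arbitrary: s m j)
  case (Var x) then show ?case by (cases "x < m") auto
next
  case (Lam t)
  have "occ (Suc j) (psubst t (up s)) = occ (Suc j) t"
    by (rule Lam.IH[where m="Suc m"]) (use Lam.prems in \<open>auto simp: up_def occ_lift split: nat.split\<close>)
  then show ?case by simp
next
  case (App t u) then show ?case by simp
next
  case (Sub t u)
  have "occ (Suc j) (psubst t (up s)) = occ (Suc j) t"
    by (rule Sub.IH(1)[where m="Suc m"]) (use Sub.prems in \<open>auto simp: up_def occ_lift split: nat.split\<close>)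
  then show ?case using Sub by simp
qed

lemma occ0_psubst_up: "occ 0 (psubst t (up s)) = occ 0 t"
  by (rule occ_psubst_low[where m=1]) (auto simp: up_def occ_lift split: nat.split)

lemma occ01_psubst_upup: "j < 2 \<Longrightarrow> occ j (psubst t (up (up s))) = occ j t"
  by (rule occ_psubst_low[where m=2]) (auto simp: up_def occ_lift split: nat.split)

lemma repl_refl: "repl x y t t"
  by (induction t arbitrary: x y) (auto intro: repl.intros)

lemma repl_occ_other: "repl x y s s' \<Longrightarrow> j \<noteq> x \<Longrightarrow> j \<noteq> y \<Longrightarrow> occ j s' = occ j s"
  by (induction arbitrary: j rule: repl.induct) auto

lemma repl_occ_sum: "repl x y s s' \<Longrightarrow> x \<noteq> y \<Longrightarrow> occ x s' + occ y s' = occ x s + occ y s"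
  by (induction rule: repl.induct) auto

lemma repl_noocc: "repl x y s s' \<Longrightarrow> occ x s = 0 \<Longrightarrow> s' = s"
  by (induction rule: repl.induct) auto

lemma repl_psubst: "repl x y s s' \<Longrightarrow> r x = Var x \<Longrightarrow> r y = Var y \<Longrightarrow> repl x y (psubst s r) (psubst s' r)"
proof (induction arbitrary: r rule: repl.induct)
  case (repl_keep x y i) then show ?case by (simp add: repl_refl)
next
  case (repl_swap x y) then show ?case by (simp add: repl.intros)
next
  case (repl_lam x y t t') then show ?case by (auto intro!: repl.intros)
next
  case (repl_app x y a a' b b') then show ?case by (auto intro!: repl.intros)
next
  case (repl_sub x y a a' b b') then show ?case by (auto intro!: repl.intros)
qed

lemma repl_psubst_eq: "repl x y s s' \<Longrightarrow> r x = r y \<Longrightarrow> psubst s' r = psubst s r"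
  by (induction arbitrary: r rule: repl.induct) auto

fun upn :: "nat \<Rightarrow> (nat \<Rightarrow> trm) \<Rightarrow> nat \<Rightarrow> trm" where
  "upn 0 s = s"
| "upn (Suc n) s = up (upn n s)"

fun wsub :: "trm list \<Rightarrow> (nat \<Rightarrow> trm) \<Rightarrow> trm list" where
  "wsub [] s = []"
| "wsub (a # L) s = psubst a (upn (length L) s) # wsub L s"

lemma length_wsub[simp]: "length (wsub L s) = length L"
  by (induction L) auto

lemma psubst_wrap: "psubst (wrap t L) s = wrap (psubst t (upn (length L) s)) (wsub L s)"
  by (induction L arbitrary: t) auto

lemma psubst_liftpow: "psubst ((lift 0 ^^ n) u) (upn n s) = (lift 0 ^^ n) (psubst u s)"
  by (induction n) (auto simp: psubst_lift0_up)

lemma lj_psubst: "lj t t' \<Longrightarrow> lj (psubst t s) (psubst t' s)"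
proof (induction arbitrary: s rule: lj.induct)
  case (dB t L u)
  show ?case
    using lj.dB[of "psubst t (up (upn (length L) s))" "wsub L s" "psubst u s"]
    by (simp add: psubst_wrap psubst_liftpow)
next
  case (w t u) then show ?case
    using lj.w[of "psubst t (up s)" "psubst u s"] by (simp add: occ0_psubst_up subst0_psubst_up)
next
  case (d t u) then show ?case
    using lj.d[of "psubst t (up s)" "psubst u s"] by (simp add: occ0_psubst_up subst0_psubst_up)
next
  case (c t t' u)
  have r: "repl 0 1 (lift 1 (psubst t (up s))) (psubst t' (up (up s)))"
    using lift1_psubst_up[of t s] repl_psubst[OF c(2), of "up (up s)"] by (simp add: up_def)
  show ?case
    using lj.c[OF _ r, of "psubst u s"] c(1,3,4)
    by (simp add: occ0_psubst_up occ01_psubst_upup psubst_lift0_up)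
qed (auto intro: lj.intros)



lemma lj_lift: "lj t t' \<Longrightarrow> lj (lift k t) (lift k t')"
  by (simp add: liftV_psubst lj_psubst)

lemma lj_subst: "lj t t' \<Longrightarrow> lj (subst t k u) (subst t' k u)"
  by (simp add: subst_psubst lj_psubst)

lemma ljs_Lam: "lj\<^sup>*\<^sup>* t t' \<Longrightarrow> lj\<^sup>*\<^sup>* (Lam t) (Lam t')"
  by (induction rule: rtranclp_induct) (auto intro: rtranclp.rtrancl_into_rtrancl lj.lam)
lemma ljs_AppL: "lj\<^sup>*\<^sup>* t t' \<Longrightarrow> lj\<^sup>*\<^sup>* (App t u) (App t' u)"
  by (induction rule: rtranclp_induct) (auto intro: rtranclp.rtrancl_into_rtrancl lj.appL)
lemma ljs_AppR: "lj\<^sup>*\<^sup>* u u' \<Longrightarrow> lj\<^sup>*\<^sup>* (App t u) (App t u')"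
  by (induction rule: rtranclp_induct) (auto intro: rtranclp.rtrancl_into_rtrancl lj.appR)
lemma ljs_SubL: "lj\<^sup>*\<^sup>* t t' \<Longrightarrow> lj\<^sup>*\<^sup>* (Sub t u) (Sub t' u)"
  by (induction rule: rtranclp_induct) (auto intro: rtranclp.rtrancl_into_rtrancl lj.subL)
lemma ljs_SubR: "lj\<^sup>*\<^sup>* u u' \<Longrightarrow> lj\<^sup>*\<^sup>* (Sub t u) (Sub t u')"
  by (induction rule: rtranclp_induct) (auto intro: rtranclp.rtrancl_into_rtrancl lj.subR)
lemma ljs_lift: "lj\<^sup>*\<^sup>* t t' \<Longrightarrow> lj\<^sup>*\<^sup>* (lift k t) (lift k t')"
  by (induction rule: rtranclp_induct) (auto intro: rtranclp.rtrancl_into_rtrancl lj_lift)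

lemma ljs_psubst_arg: "(\<And>i. lj\<^sup>*\<^sup>* (s i) (s' i)) \<Longrightarrow> lj\<^sup>*\<^sup>* (psubst t s) (psubst t s')"
proof (induction t arbitrary: s s')
  case (Var x) then show ?case by simp
next
  case (Lam t)
  have "lj\<^sup>*\<^sup>* (up s i) (up s' i)" for i using Lam.prems by (cases i) (auto intro: ljs_lift)
  then show ?case by (auto intro: ljs_Lam Lam.IH)
next
  case (App t u)
  have "lj\<^sup>*\<^sup>* (App (psubst t s) (psubst u s)) (App (psubst t s') (psubst u s))"
    using App by (auto intro: ljs_AppL)
  also have "lj\<^sup>*\<^sup>* \<dots> (App (psubst t s') (psubst u s'))"
    using App by (auto intro: ljs_AppR)
  finally show ?case by simp
next
  case (Sub t u)
  have "lj\<^sup>*\<^sup>* (up s i) (up s' i)" for i using Sub.prems by (cases i) (auto intro: ljs_lift)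
  then have "lj\<^sup>*\<^sup>* (Sub (psubst t (up s)) (psubst u s)) (Sub (psubst t (up s')) (psubst u s))"
    using Sub by (auto intro: ljs_SubL)
  also have "lj\<^sup>*\<^sup>* \<dots> (Sub (psubst t (up s')) (psubst u s'))"
    using Sub by (auto intro: ljs_SubR)
  finally show ?case by simp
qed

fun occw :: "nat \<Rightarrow> trm list \<Rightarrow> nat" where
  "occw j [] = 0"
| "occw j (a # L) = occ (j + length L) a + occw j L"

lemma occ_wrap: "occ j (wrap t L) = occ (j + length L) t + occw j L"
  by (induction L arbitrary: t j) auto

lemma lj_occ0: "lj a b \<Longrightarrow> occ j a = 0 \<Longrightarrow> occ j b = 0"
proof (induction arbitrary: j rule: lj.induct)
  case (dB t L u) then show ?case by (simp add: occ_wrap occ_liftpow)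
next
  case (w t u) then show ?case by (simp add: occ_subst)
next
  case (d t u) then show ?case by (simp add: occ_subst)
next
  case (c t t' u)
  have "occ (Suc (Suc j)) t' = occ (Suc (Suc j)) (lift 1 t)"
    by (rule repl_occ_other[OF c(2)]) auto
  then show ?case using c by (simp add: occ_lift)
qed auto

lemma lift_subst_noocc: "occ k b = 0 \<Longrightarrow> lift k (subst b k X) = b"
  by (induction b arbitrary: k X) auto

lemma subst_lift_same: "subst (lift k w) k X = w"
  by (induction w arbitrary: k X) auto

lemma lj_lift_refl: "lj (lift k w) b \<Longrightarrow> \<exists>w'. b = lift k w' \<and> lj w w'"
proof -
  assume h: "lj (lift k w) b"
  have "occ k b = 0" using lj_occ0[OF h] by (simp add: occ_lift)
  then have "b = lift k (subst b k (Var 0))" by (simp add: lift_subst_noocc)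
  moreover have "lj w (subst b k (Var 0))" using lj_subst[OF h, of k "Var 0"] by (simp add: subst_lift_same)
  ultimately show ?thesis by blast
qed

lemma lj_liftpow_refl: "lj ((lift 0 ^^ n) w) b \<Longrightarrow> \<exists>w'. b = (lift 0 ^^ n) w' \<and> lj w w'"
proof (induction n arbitrary: b)
  case 0 then show ?case by simp
next
  case (Suc n)
  from lj_lift_refl[of 0 "(lift 0 ^^ n) w" b] Suc.prems obtain b0 where "b = lift 0 b0" "lj ((lift 0 ^^ n) w) b0" by auto
  with Suc.IH show ?case by fastforce
qed



fun apps :: "trm \<Rightarrow> trm list \<Rightarrow> trm" where
  "apps h [] = h"
| "apps h (v # vs) = apps (App h v) vs"

lemma apps_snoc: "apps h (vs @ [v]) = App (apps h vs) v"
  by (induction vs arbitrary: h) auto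

lemma wrap_append: "wrap t (A @ B) = wrap (wrap t A) B"
  by (induction A arbitrary: t) auto

lemma wrap_snoc: "wrap t (A @ [a]) = Sub (wrap t A) a"
  by (simp add: wrap_append)

lemma wrap_Lam_cases: "wrap (Lam s) L = Lam s' \<Longrightarrow> L = [] \<and> s = s'"
  by (cases L rule: rev_exhaust) (auto simp: wrap_snoc)

lemma wrap_not_App: "wrap (Lam s) L \<noteq> App a b"
  by (cases L rule: rev_exhaust) (auto simp: wrap_snoc)

lemma wrap_Lam_eq: "wrap (Lam s) L' = wrap t L \<Longrightarrow> \<exists>L0. L' = L0 @ L \<and> t = wrap (Lam s) L0"
proof (induction L arbitrary: L' rule: rev_induct)
  case Nil then show ?case by auto
next
  case (snoc a L)
  show ?case
  proof (cases L' rule: rev_exhaust)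
    case Nil then show ?thesis using snoc.prems by (simp add: wrap_snoc)
  next
    case (snoc L0' a')
    with snoc.prems have "wrap (Lam s) L0' = wrap t L" "a' = a" by (auto simp: wrap_snoc)
    with snoc.IH snoc show ?thesis by fastforce
  qed
qed

inductive lj_root :: "trm \<Rightarrow> trm \<Rightarrow> trm \<Rightarrow> bool" where
  rw: "occ 0 t = 0 \<Longrightarrow> lj_root t u (subst t 0 u)"
| rd: "occ 0 t = 1 \<Longrightarrow> lj_root t u (subst t 0 u)"
| rc: "occ 0 t \<ge> 2 \<Longrightarrow> repl 0 1 (lift 1 t) t' \<Longrightarrow> occ 0 t' \<ge> 1 \<Longrightarrow> occ 1 t' \<ge> 1
      \<Longrightarrow> lj_root t u (Sub (Sub t' (lift 0 u)) u)"

lemma lj_Sub_inv: "lj (Sub t u) X \<Longrightarrow> (\<exists>t'. lj t t' \<and> X = Sub t' u) \<or> (\<exists>u'. lj u u' \<and> X = Sub t u') \<or> lj_root t u X"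
  by (erule lj.cases) (auto intro: lj_root.intros)

lemma lj_Lam_inv: "lj (Lam t) X \<Longrightarrow> \<exists>t'. lj t t' \<and> X = Lam t'"
  by (erule lj.cases) auto

lemma lj_Var_inv: "\<not> lj (Var x) X"
  by (auto elim: lj.cases)

lemma lj_App_inv: "lj (App t u) X \<Longrightarrow> (\<exists>t'. lj t t' \<and> X = App t' u) \<or> (\<exists>u'. lj u u' \<and> X = App t u')
   \<or> (\<exists>s L. t = wrap (Lam s) L \<and> X = wrap (Sub s ((lift 0 ^^ length L) u)) L)"
  by (erule lj.cases) auto

lemma lj_wrap_inv: "lj (wrap t L) X \<Longrightarrow> (\<exists>t'. lj t t' \<and> X = wrap t' L)
  \<or> (\<exists>i a'. i < length L \<and> lj (L!i) a' \<and> X = wrap t (L[i:=a']))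
  \<or> (\<exists>L1 a L2 R. L = L1 @ a # L2 \<and> lj_root (wrap t L1) a R \<and> X = wrap R L2)"
proof (induction L arbitrary: t X)
  case Nil then show ?case by auto
next
  case (Cons a L)
  from Cons.IH[of "Sub t a" X] Cons.prems
  consider (1) t'' where "lj (Sub t a) t''" "X = wrap t'' L"
    | (2) i a' where "i < length L" "lj (L!i) a'" "X = wrap (Sub t a) (L[i:=a'])"
    | (3) L1 b L2 R where "L = L1 @ b # L2" "lj_root (wrap (Sub t a) L1) b R" "X = wrap R L2"
    by auto
  then show ?case
  proof cases
    case 1
    from lj_Sub_inv[OF 1(1)] show ?thesis
    proof (elim disjE exE conjE)
      fix t' assume "lj t t'" "t'' = Sub t' a" then show ?thesis using 1 by auto
    next
      fix u' assume "lj a u'" "t'' = Sub t u'"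
      then show ?thesis using 1 by (intro disjI2 disjI1 exI[of _ 0]) auto
    next
      assume "lj_root t a t''"
      then show ?thesis using 1 by (intro disjI2 disjI2 exI[of _ "[]"]) auto
    qed
  next
    case 2
    then show ?thesis by (intro disjI2 disjI1 exI[of _ "Suc i"]) auto
  next
    case 3
    then show ?thesis by (intro disjI2 disjI2 exI[of _ "a # L1"]) auto
  qed
qed

lemma lj_apps_inv: "lj (apps h vs) X \<Longrightarrow> (\<exists>h'. lj h h' \<and> X = apps h' vs)
  \<or> (\<exists>j v'. j < length vs \<and> lj (vs!j) v' \<and> X = apps h (vs[j:=v']))
  \<or> (\<exists>s L v vs0. vs = v # vs0 \<and> h = wrap (Lam s) L \<and> X = apps (wrap (Sub s ((lift 0 ^^ length L) v)) L) vs0)"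
proof (induction vs arbitrary: h X)
  case Nil then show ?case by auto
next
  case (Cons v vs)
  from Cons.IH[of "App h v" X] Cons.prems
  consider (1) h'' where "lj (App h v) h''" "X = apps h'' vs"
    | (2) j v' where "j < length vs" "lj (vs!j) v'" "X = apps (App h v) (vs[j:=v'])"
    | (3) s L where "App h v = wrap (Lam s) L"
    by auto
  then show ?case
  proof cases
    case 1
    from lj_App_inv[OF 1(1)] show ?thesis
    proof (elim disjE exE conjE)
      fix t' assume "lj h t'" "h'' = App t' v" then show ?thesis using 1 by auto
    next
      fix u' assume "lj v u'" "h'' = App h u'"
      then show ?thesis using 1 by (intro disjI2 disjI1 exI[of _ 0]) auto
    next
      fix s L assume "h = wrap (Lam s) L" "h'' = wrap (Sub s ((lift 0 ^^ length L) v)) L"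
      then show ?thesis using 1 by auto
    qed
  next
    case 2
    then show ?thesis by (intro disjI2 disjI1 exI[of _ "Suc j"]) auto
  next
    case 3 then show ?thesis using wrap_not_App by metis
  qed
qed

lemma lj_apps_head: "lj h h' \<Longrightarrow> lj (apps h vs) (apps h' vs)"
  by (induction vs arbitrary: h h') (auto intro: lj.appL)

lemma ljs_apps_head: "lj\<^sup>*\<^sup>* h h' \<Longrightarrow> lj\<^sup>*\<^sup>* (apps h vs) (apps h' vs)"
  by (induction rule: rtranclp_induct) (auto intro: rtranclp.rtrancl_into_rtrancl lj_apps_head)

lemma lj_apps_arg: "j < length vs \<Longrightarrow> lj (vs!j) v' \<Longrightarrow> lj (apps h vs) (apps h (vs[j:=v']))"
proof (induction vs arbitrary: h j)
  case Nil then show ?case by simp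
next
  case (Cons v vs) then show ?case
    by (cases j) (auto intro: lj_apps_head lj.appR)
qed

definition sn :: "trm \<Rightarrow> bool" where "sn t = Wellfounded.accp (\<lambda>y x. lj x y) t"

lemma sn_intro: "(\<And>y. lj x y \<Longrightarrow> sn y) \<Longrightarrow> sn x"
  unfolding sn_def by (rule accp.intros) auto

lemma sn_step: "sn x \<Longrightarrow> lj x y \<Longrightarrow> sn y"
  unfolding sn_def by (rule accp_downward)

lemma sn_steps: "lj\<^sup>*\<^sup>* x y \<Longrightarrow> sn x \<Longrightarrow> sn y"
  by (induction rule: rtranclp_induct) (auto intro: sn_step)

lemma sn_SN: "sn x \<Longrightarrow> SN lj x"
proof -
  assume "sn x"
  then have "\<forall>f. f 0 = x \<longrightarrow> \<not> (\<forall>i. lj (f i) (f (Suc i)))"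
    unfolding sn_def
  proof (induction rule: accp.induct)
    case (accI x)
    show ?case
    proof (intro allI impI notI)
      fix f assume f0: "f 0 = x" and ch: "\<forall>i. lj (f i) (f (Suc i))"
      have "lj x (f (Suc 0))" using ch f0 by metis
      then have "\<forall>g. g 0 = f (Suc 0) \<longrightarrow> \<not> (\<forall>i. lj (g i) (g (Suc i)))" using accI.IH by blast
      then have "\<not> (\<forall>i. lj (f (Suc i)) (f (Suc (Suc i))))" by (erule_tac x="\<lambda>i. f (Suc i)" in allE) simp
      then show False using ch by blast
    qed
  qed
  then show ?thesis unfolding SN_def by blast
qed

lemma SN_accp: "SN r x \<Longrightarrow> Wellfounded.accp (\<lambda>y x. r x y) x"
proof (rule ccontr)
  let ?A = "Wellfounded.accp (\<lambda>y x. r x y)"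
  assume sn: "SN r x" and na: "\<not> ?A x"
  have step: "\<not> ?A z \<Longrightarrow> \<exists>y. r z y \<and> \<not> ?A y" for z
    by (meson accp.intros)
  define g where "g z = (SOME y. r z y \<and> \<not> ?A y)" for z
  have g: "\<not> ?A z \<Longrightarrow> r z (g z) \<and> \<not> ?A (g z)" for z
    unfolding g_def using step[of z] by (rule someI_ex)
  define f where "f i = (g ^^ i) x" for i
  have "\<not> ?A (f i)" for i by (induction i) (auto simp: f_def na g)
  then have "r (f i) (f (Suc i))" for i using g by (simp add: f_def)
  moreover have "f 0 = x" by (simp add: f_def)
  ultimately show False using sn unfolding SN_def by blast
qed



fun lifts :: "trm list \<Rightarrow> trm list" where
  "lifts [] = []"
| "lifts (w # ws) = (lift 0 ^^ length ws) w # lifts ws"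

lemma length_lifts[simp]: "length (lifts ws) = length ws"
  by (induction ws) auto

lemma liftpow_add: "(lift 0 ^^ n) ((lift 0 ^^ k) w) = (lift 0 ^^ (n + k)) w"
  by (simp add: funpow_add)

lemma lifts_append: "lifts (xs @ ys) = map (lift 0 ^^ length ys) (lifts xs) @ lifts ys"
  by (induction xs) (auto simp: liftpow_add add.commute)

lemma lifts_nth: "j < length ws \<Longrightarrow> lifts ws ! j = (lift 0 ^^ (length ws - Suc j)) (ws ! j)"
  by (induction ws arbitrary: j) (auto simp: nth_Cons split: nat.split)

lemma lifts_update: "j < length ws \<Longrightarrow> (lifts ws)[j := (lift 0 ^^ (length ws - Suc j)) w'] = lifts (ws[j := w'])"
  by (induction ws arbitrary: j) (auto split: nat.split)

definition rho :: "trm list \<Rightarrow> nat \<Rightarrow> trm" where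
  "rho ws i = (if i < length ws then ws ! i else Var (i - length ws))"

definition unf :: "trm \<Rightarrow> trm list \<Rightarrow> trm" where
  "unf t ws = psubst t (rho ws)"

definition occs :: "trm \<Rightarrow> nat \<Rightarrow> nat list" where
  "occs t k = map (\<lambda>i. occ i t) [0..<k]"

definition M :: "trm \<Rightarrow> trm list \<Rightarrow> (nat \<times> trm) multiset" where
  "M t ws = mset (zip (occs t (length ws)) ws)"

lemma liftpow_psubst: "(lift 0 ^^ n) v = psubst v (\<lambda>i. Var (i + n))"
proof (induction n)
  case 0 then show ?case by simp
next
  case (Suc n) then show ?case by (simp add: lift0_psubst psubst_ren_comp)
qed

lemma psubst_liftpow_gen: "psubst ((lift 0 ^^ n) w) s = psubst w (\<lambda>j. s (j + n))"
  by (simp add: liftpow_psubst psubst_ren_comp)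

lemma psubst_liftpow_rho: "psubst ((lift 0 ^^ length ws) v) (rho ws) = v"
  by (simp add: psubst_liftpow_gen rho_def)

lemma upn_subst: "upn n (\<lambda>j. if j < k then Var j else if j = k then u else Var (j - 1))
   = (\<lambda>j. if j < n + k then Var j else if j = n + k then (lift 0 ^^ n) u else Var (j - 1))"
proof (induction n)
  case 0 then show ?case by (simp add: fun_eq_iff)
next
  case (Suc n) then show ?case by (auto simp: fun_eq_iff up_def split: nat.split)
qed

lemma upn_lift1: "upn n (\<lambda>j. Var (if j < 1 then j else Suc j)) = (\<lambda>j. Var (if j < Suc n then j else Suc j))"
proof (induction n)
  case 0 then show ?case by simp
next
  case (Suc n) then show ?case by (auto simp: fun_eq_iff up_def split: nat.split)
qed

lemma wsub_subst0: "wsub (map (lift 0 ^^ Suc m) (lifts ws1))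
      (\<lambda>j. if j < 0 then Var j else if j = 0 then u else Var (j - 1)) = map (lift 0 ^^ m) (lifts ws1)"
proof (induction ws1)
  case Nil then show ?case by simp
next
  case (Cons w ws1)
  have "psubst ((lift 0 ^^ Suc m) ((lift 0 ^^ length ws1) w)) (upn (length ws1) (\<lambda>j. if j < 0 then Var j else if j = 0 then u else Var (j - 1)))
        = (lift 0 ^^ m) ((lift 0 ^^ length ws1) w)"
    by (simp only: upn_subst liftpow_add psubst_liftpow_gen) (simp add: liftpow_psubst)
  then show ?case using Cons by simp
qed

lemma wrap_subst0: "subst (wrap t (map (lift 0 ^^ Suc m) (lifts ws1))) 0 ((lift 0 ^^ m) w)
  = wrap (subst t (length ws1) ((lift 0 ^^ (length ws1 + m)) w)) (map (lift 0 ^^ m) (lifts ws1))"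
proof -
  have "subst t (length ws1) ((lift 0 ^^ (length ws1 + m)) w) =
        psubst t (upn (length ws1) (\<lambda>j. if j < 0 then Var j else if j = 0 then (lift 0 ^^ m) w else Var (j - 1)))"
    unfolding upn_subst subst_psubst liftpow_add by (rule arg_cong[where f="psubst t"]) (auto simp: fun_eq_iff)
  then show ?thesis
    by (simp only: subst_psubst[of "wrap _ _"] psubst_wrap length_map length_lifts wsub_subst0)
qed

lemma wsub_lift1: "wsub (map (lift 0 ^^ Suc m) (lifts ws1)) (\<lambda>j. Var (if j < 1 then j else Suc j))
    = map (lift 0 ^^ Suc (Suc m)) (lifts ws1)"
proof (induction ws1)
  case Nil then show ?case by simp
next
  case (Cons w ws1)
  have "psubst ((lift 0 ^^ Suc m) ((lift 0 ^^ length ws1) w)) (upn (length ws1) (\<lambda>j. Var (if j < 1 then j else Suc j)))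
        = (lift 0 ^^ Suc (Suc m)) ((lift 0 ^^ length ws1) w)"
    by (simp only: upn_lift1 liftpow_add psubst_liftpow_gen) (simp del: funpow.simps(2) add: liftpow_psubst)
  then show ?case using Cons by simp
qed

lemma wrap_lift1: "lift 1 (wrap t (map (lift 0 ^^ Suc m) (lifts ws1)))
  = wrap (lift (Suc (length ws1)) t) (map (lift 0 ^^ Suc (Suc m)) (lifts ws1))"
proof -
  have "lift (Suc (length ws1)) t = psubst t (upn (length ws1) (\<lambda>j. Var (if j < 1 then j else Suc j)))"
    by (simp only: upn_lift1 liftV_psubst)
  then show ?thesis
    by (simp only: liftV_psubst[of 1 "wrap _ _"] psubst_wrap length_map length_lifts wsub_lift1)
qed

lemma occw_lifts: "j \<le> m \<Longrightarrow> occw j (map (lift 0 ^^ Suc m) (lifts ws)) = 0"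
  by (induction ws) (auto simp del: funpow.simps(2) simp add: liftpow_add occ_liftpow)

lemma repl_wrap_inv: "repl x y (wrap s L) r \<Longrightarrow> (\<forall>j<length L. occ (x + (length L - Suc j)) (L!j) = 0)
   \<Longrightarrow> \<exists>s'. r = wrap s' L \<and> repl (x + length L) (y + length L) s s'"
proof (induction L arbitrary: s r)
  case Nil then show ?case by simp
next
  case (Cons a L)
  have "\<forall>j<length L. occ (x + (length L - Suc j)) (L!j) = 0"
  proof (intro allI impI)
    fix j assume "j < length L"
    then show "occ (x + (length L - Suc j)) (L!j) = 0" using Cons.prems(2)[rule_format, of "Suc j"] by simp
  qed
  with Cons.IH[of "Sub s a" r] Cons.prems(1) obtain s'' where
    s'': "r = wrap s'' L" "repl (x + length L) (y + length L) (Sub s a) s''" by auto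
  from s''(2) obtain s' a' where "s'' = Sub s' a'" "repl (Suc (x + length L)) (Suc (y + length L)) s s'"
     "repl (x + length L) (y + length L) a a'"
    by (auto elim: repl.cases)
  moreover have "occ (x + length L) a = 0" using Cons.prems(2)[rule_format, of 0] by simp
  ultimately show ?case using s''(1) repl_noocc by fastforce
qed



lemma length_occs[simp]: "length (occs t k) = k" by (simp add: occs_def)
lemma nth_occs[simp]: "j < k \<Longrightarrow> occs t k ! j = occ j t" by (simp add: occs_def)

lemma M_split: "M t (ws1 @ w # ws2) = mset (zip (take (length ws1) (occs t (length ws1 + Suc (length ws2)))) ws1)
   + {#(occ (length ws1) t, w)#} + mset (zip (drop (Suc (length ws1)) (occs t (length ws1 + Suc (length ws2)))) ws2)"
proof -
  let ?os = "occs t (length ws1 + Suc (length ws2))"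
  have "?os = take (length ws1) ?os @ ?os ! length ws1 # drop (Suc (length ws1)) ?os"
    by (rule id_take_nth_drop) simp
  then have "zip ?os (ws1 @ w # ws2) = zip (take (length ws1) ?os @ ?os ! length ws1 # drop (Suc (length ws1)) ?os) (ws1 @ w # ws2)"
    by (rule arg_cong[where f="\<lambda>x. zip x _"])
  also have "\<dots> = zip (take (length ws1) ?os) ws1 @ (occ (length ws1) t, w) # zip (drop (Suc (length ws1)) ?os) ws2"
    by (subst zip_append) simp_all
  finally have "zip ?os (ws1 @ w # ws2) = zip (take (length ws1) ?os) ws1 @ (occ (length ws1) t, w) # zip (drop (Suc (length ws1)) ?os) ws2" .
  then show ?thesis by (simp add: M_def)
qed

lemma rho_Nil[simp]: "rho [] = Var" by (simp add: rho_def fun_eq_iff)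

lemma unf_wd: "unf (subst t (length ws1) ((lift 0 ^^ (length ws1 + length ws2)) w)) (ws1 @ ws2) = unf t (ws1 @ w # ws2)"
  unfolding unf_def subst_psubst psubst_comp
  by (rule arg_cong[where f="psubst t"])
     (auto simp: fun_eq_iff psubst_liftpow_gen rho_def nth_append nth_Cons')

lemma M_wd: "M (subst t (length ws1) ((lift 0 ^^ (length ws1 + length ws2)) w)) (ws1 @ ws2) + {#(occ (length ws1) t, w)#}
   = M t (ws1 @ w # ws2)"
proof -
  let ?t = "subst t (length ws1) ((lift 0 ^^ (length ws1 + length ws2)) w)"
  let ?os = "occs t (length ws1 + Suc (length ws2))"
  have "occs ?t (length ws1 + length ws2) = take (length ws1) ?os @ drop (Suc (length ws1)) ?os"
    by (rule nth_equalityI) (auto simp: nth_append occ_subst occ_liftpow)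
  then have "M ?t (ws1 @ ws2) = mset (zip (take (length ws1) ?os) ws1) + mset (zip (drop (Suc (length ws1)) ?os) ws2)"
    by (simp add: M_def)
  then show ?thesis by (simp add: M_split)
qed

lemma unf_c: "repl i (Suc i) (lift (Suc i) t) t' \<Longrightarrow> i = length ws1 \<Longrightarrow> unf t' (ws1 @ w # w # ws2) = unf t (ws1 @ w # ws2)"
proof -
  assume r: "repl i (Suc i) (lift (Suc i) t) t'" and i: "i = length ws1"
  let ?r = "rho (ws1 @ w # w # ws2)"
  have "psubst t' ?r = psubst (lift (Suc i) t) ?r"
    by (rule repl_psubst_eq[OF r]) (simp add: rho_def nth_append i)
  also have "\<dots> = psubst t (\<lambda>j. ?r (if j < Suc i then j else Suc j))"
    by (simp add: liftV_psubst psubst_ren_comp)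
  also have "(\<lambda>j. ?r (if j < Suc i then j else Suc j)) = rho (ws1 @ w # ws2)"
  proof
    fix j
    show "?r (if j < Suc i then j else Suc j) = rho (ws1 @ w # ws2) j"
    proof (cases "j < i")
      case True then show ?thesis by (simp add: rho_def nth_append i)
    next
      case False
      show ?thesis
      proof (cases "j = i")
        case True then show ?thesis by (simp add: rho_def nth_append i)
      next
        case False
        with \<open>\<not> j < i\<close> have "j > i" by simp
        then obtain d where d: "j = Suc (i + d)" by (metis less_iff_Suc_add)
        show ?thesis by (simp add: rho_def nth_append i d)
      qed
    qed
  qed
  finally show ?thesis by (simp add: unf_def)
qed

lemma M_c: "repl i (Suc i) (lift (Suc i) t) t' \<Longrightarrow> i = length ws1 \<Longrightarrow>
  \<exists>I. M t (ws1 @ w # ws2) = I + {#(occ i t, w)#} \<and> M t' (ws1 @ w # w # ws2) = I + {#(occ i t', w), (occ (Suc i) t', w)#}"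
proof -
  assume r: "repl i (Suc i) (lift (Suc i) t) t'" and i: "i = length ws1"
  let ?os = "occs t (length ws1 + Suc (length ws2))"
  let ?os' = "occs t' (length ws1 + Suc (Suc (length ws2)))"
  have o1: "occ j t' = occ j t" if "j < i" for j
    using repl_occ_other[OF r, of j] that by (simp add: occ_lift)
  have o2: "occ j t' = occ (j - 1) t" if "j > Suc i" for j
    using repl_occ_other[OF r, of j] that by (simp add: occ_lift)
  have "take (length ws1) ?os' = take (length ws1) ?os"
    by (rule nth_equalityI) (auto simp: o1 i)
  moreover have "drop (Suc (Suc (length ws1))) ?os' = drop (Suc (length ws1)) ?os"
    by (rule nth_equalityI) (auto simp: o2 i)
  moreover have "M t' (ws1 @ w # w # ws2) = mset (zip (take (length ws1) ?os') ws1)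
      + {#(occ i t', w)#} + {#(occ (Suc i) t', w)#} + mset (zip (drop (Suc (Suc (length ws1))) ?os') ws2)"
  proof -
    have d1: "?os' ! length ws1 # drop (Suc (length ws1)) ?os' = drop (length ws1) ?os'"
      by (rule Cons_nth_drop_Suc) simp
    have d2: "?os' ! Suc (length ws1) # drop (Suc (Suc (length ws1))) ?os' = drop (Suc (length ws1)) ?os'"
      by (rule Cons_nth_drop_Suc) simp
    have e: "?os' = take (length ws1) ?os' @ ?os' ! length ws1 # ?os' ! Suc (length ws1) # drop (Suc (Suc (length ws1))) ?os'"
      unfolding d2 d1 append_take_drop_id ..
    have "zip ?os' (ws1 @ w # w # ws2) = zip (take (length ws1) ?os') ws1 @ (occ i t', w) # (occ (Suc i) t', w) # zip (drop (Suc (Suc (length ws1))) ?os') ws2"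
      by (subst e) (simp add: i)
    then show ?thesis by (simp add: M_def)
  qed
  ultimately show ?thesis
    by (intro exI[of _ "mset (zip (take (length ws1) ?os) ws1) + mset (zip (drop (Suc (length ws1)) ?os) ws2)"])
       (simp add: M_split i)
qed

lemma M_upd: "i < length ws \<Longrightarrow> \<exists>I. M t ws = I + {#(occ i t, ws!i)#} \<and> M t (ws[i:=w']) = I + {#(occ i t, w')#}"
proof -
  assume i: "i < length ws"
  let ?os = "occs t (length ws)"
  have "zip ?os (ws[i:=w']) = (zip ?os ws)[i := (occ i t, w')]"
    using zip_update[of ?os i "occ i t" ws w'] i list_update_id[of ?os i] by simp
  then show ?thesis using i
  proof (intro exI[of _ "mset (zip ?os ws) - {#(occ i t, ws!i)#}"] conjI)
    have "(occ i t, ws!i) \<in> set (zip ?os ws)" using i by (auto simp: set_zip intro!: exI[of _ i])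
    then show "M t ws = mset (zip ?os ws) - {#(occ i t, ws!i)#} + {#(occ i t, ws!i)#}" by (simp add: M_def)
  qed (use i in \<open>auto simp: M_def mset_update\<close>)
qed



definition eord :: "((nat \<times> trm) \<times> (nat \<times> trm)) set" where
  "eord = {((n', a'), (n, a)). n' < n \<or> (n' = n \<and> lj a a' \<and> sn a)}"

lemma wf_eord: "wf eord"
proof -
  let ?R = "\<lambda>a' a. lj a a' \<and> sn a"
  have "Wellfounded.accp ?R x" for x
  proof (cases "sn x")
    case True
    have "Wellfounded.accp (\<lambda>y x. lj x y) \<le> Wellfounded.accp ?R"
      by (rule accp_subset) auto
    then show ?thesis using True unfolding sn_def by auto
  next
    case False then show ?thesis by (auto intro: accp.intros)
  qed
  then have "wfp ?R" by (simp add: wfp_iff_accp)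
  then have w2: "wf {(a', a). lj a a' \<and> sn a}" by (simp add: wfp_def)
  have "eord \<subseteq> less_than <*lex*> {(a', a). lj a a' \<and> sn a}"
    by (auto simp: eord_def)
  then show ?thesis using wf_subset w2 by blast
qed

lemma sn_trancl: "sn x \<Longrightarrow> Wellfounded.accp (\<lambda>y x. lj\<^sup>+\<^sup>+ x y) x"
  unfolding sn_def
proof (induction rule: accp.induct)
  case (accI x)
  show ?case
  proof (rule accp.intros)
    fix y assume "lj\<^sup>+\<^sup>+ x y"
    then obtain z where z: "lj x z" "lj\<^sup>*\<^sup>* z y" by (auto dest: tranclpD)
    have az: "Wellfounded.accp (\<lambda>y x. lj\<^sup>+\<^sup>+ x y) z" using accI.IH z(1) by blast
    from rtranclpD[OF z(2)] show "Wellfounded.accp (\<lambda>y x. lj\<^sup>+\<^sup>+ x y) y"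
      using az accp_downward[OF az, of y] by auto
  qed
qed

lemma G_aux:
  assumes "Wellfounded.accp (\<lambda>y x. lj\<^sup>+\<^sup>+ x y) S"
  shows "\<forall>t ws vs. S = apps (unf t ws) vs \<longrightarrow> (\<forall>w\<in>set ws. sn w) \<longrightarrow> sn (apps (wrap t (lifts ws)) vs)"
  using assms
proof (induction rule: accp.induct)
  case (accI S)
  have outer: "\<And>t' ws' vs'. lj\<^sup>+\<^sup>+ S (apps (unf t' ws') vs') \<Longrightarrow> (\<forall>w\<in>set ws'. sn w) \<Longrightarrow> sn (apps (wrap t' (lifts ws')) vs')"
    using accI.IH by blast
  have main: "\<forall>t ws vs. M t ws = X \<longrightarrow> S = apps (unf t ws) vs \<longrightarrow> (\<forall>w\<in>set ws. sn w) \<longrightarrow> sn (apps (wrap t (lifts ws)) vs)" for X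
  proof (induction X rule: wf_induct[OF wf_mult[OF wf_eord]])
    case (1 X)
    have inner: "\<And>t' ws' vs'. (M t' ws', X) \<in> mult eord \<Longrightarrow> S = apps (unf t' ws') vs' \<Longrightarrow> (\<forall>w\<in>set ws'. sn w) \<Longrightarrow> sn (apps (wrap t' (lifts ws')) vs')"
      using 1 by blast
    show ?case
    proof (intro allI impI)
      fix t ws vs assume MX: "M t ws = X" and S: "S = apps (unf t ws) vs" and snw: "\<forall>w\<in>set ws. sn w"
      show "sn (apps (wrap t (lifts ws)) vs)"
      proof (rule sn_intro)
        fix Y assume "lj (apps (wrap t (lifts ws)) vs) Y"
        from lj_apps_inv[OF this] show "sn Y"
        proof (elim disjE exE conjE)
          fix h' assume hstep: "lj (wrap t (lifts ws)) h'" and Y: "Y = apps h' vs"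
          from lj_wrap_inv[OF hstep] show "sn Y"
          proof (elim disjE exE conjE)
            fix t' assume "lj t t'" "h' = wrap t' (lifts ws)"
            moreover have "lj S (apps (unf t' ws) vs)"
              unfolding S unf_def by (rule lj_apps_head, rule lj_psubst) fact
            ultimately show "sn Y" using outer[of t' ws vs] snw Y by auto
          next
            fix i a' assume i: "i < length (lifts ws)" and st: "lj (lifts ws ! i) a'" and h': "h' = wrap t ((lifts ws)[i := a'])"
            have i': "i < length ws" using i by simp
            from st lifts_nth[OF i'] lj_liftpow_refl obtain w' where
              w': "a' = (lift 0 ^^ (length ws - Suc i)) w'" "lj (ws ! i) w'" by metis
            let ?ws = "ws[i := w']"
            have h'': "h' = wrap t (lifts ?ws)" using h' w'(1) lifts_update[OF i'] by simp
            have snw': "\<forall>w\<in>set ?ws. sn w"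
              using snw set_update_subset_insert[of ws i w'] sn_step[OF _ w'(2)] i' by auto
            have "lj\<^sup>*\<^sup>* (rho ws j) (rho ?ws j)" for j
              using w'(2) i' by (cases "j = i") (auto simp: rho_def)
            then have "lj\<^sup>*\<^sup>* S (apps (unf t ?ws) vs)"
              unfolding S unf_def by (intro ljs_apps_head ljs_psubst_arg) auto
            then consider "S = apps (unf t ?ws) vs" | "lj\<^sup>+\<^sup>+ S (apps (unf t ?ws) vs)" by (auto dest: rtranclpD)
            then show "sn Y"
            proof cases
              case 1
              from M_upd[OF i', of t w'] obtain I where I: "M t ws = I + {#(occ i t, ws ! i)#}" "M t ?ws = I + {#(occ i t, w')#}" by blast
              have "(M t ?ws, X) \<in> mult eord"
                unfolding MX[symmetric] I
                by (rule one_step_implies_mult) (use w'(2) snw i' in \<open>auto simp: eord_def\<close>)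
              then show ?thesis using inner[OF _ 1 snw'] Y h'' by simp
            next
              case 2 then show ?thesis using outer[OF 2 snw'] Y h'' by simp
            qed
          next
            fix L1 a L2 R assume L: "lifts ws = L1 @ a # L2" and rt: "lj_root (wrap t L1) a R" and h': "h' = wrap R L2"
            define i where "i = length L1"
            have "length (lifts ws) = length L1 + Suc (length L2)" using L by simp
            then have i: "i < length ws" by (simp add: i_def)
            define ws1 where "ws1 = take i ws"
            define w where "w = ws ! i"
            define ws2 where "ws2 = drop (Suc i) ws"
            define m where "m = length ws2"
            have ws: "ws = ws1 @ w # ws2" unfolding ws1_def w_def ws2_def using i by (simp add: id_take_nth_drop)
            have li: "length ws1 = i" using i by (simp add: ws1_def)
            have "lifts ws = map (lift 0 ^^ Suc m) (lifts ws1) @ (lift 0 ^^ m) w # lifts ws2"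
              by (simp add: ws lifts_append m_def)
            with L have L1: "L1 = map (lift 0 ^^ Suc m) (lifts ws1)" and a: "a = (lift 0 ^^ m) w" and L2: "L2 = lifts ws2"
              by (auto simp: i_def li)
            have snw1: "\<forall>w\<in>set ws1. sn w" and snw2: "\<forall>w\<in>set ws2. sn w" and snw0: "sn w" using snw ws by auto
            from rt show "sn Y"
            proof cases
              case rw
              let ?t = "subst t i ((lift 0 ^^ (i + m)) w)"
              have R: "R = wrap ?t (map (lift 0 ^^ m) (lifts ws1))"
                using rw wrap_subst0[of t m ws1 w] by (simp add: L1 a li)
              have h'': "h' = wrap ?t (lifts (ws1 @ ws2))"
                by (simp add: h' R L2 lifts_append wrap_append m_def)
              have U: "unf ?t (ws1 @ ws2) = unf t ws"
                using unf_wd[of t ws1 ws2 w] by (simp add: ws li m_def)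
              have MM: "M ?t (ws1 @ ws2) + {#(occ i t, w)#} = M t ws"
                using M_wd[of t ws1 ws2 w] by (simp add: ws li m_def)
              have "(M ?t (ws1 @ ws2) + {#}, M ?t (ws1 @ ws2) + {#(occ i t, w)#}) \<in> mult eord"
                by (rule one_step_implies_mult) auto
              then have "(M ?t (ws1 @ ws2), X) \<in> mult eord" using MM MX by simp
              then show ?thesis using inner[of ?t "ws1 @ ws2" vs] U S snw1 snw2 Y h'' by auto
            next
              case rd
              let ?t = "subst t i ((lift 0 ^^ (i + m)) w)"
              have R: "R = wrap ?t (map (lift 0 ^^ m) (lifts ws1))"
                using rd wrap_subst0[of t m ws1 w] by (simp add: L1 a li)
              have h'': "h' = wrap ?t (lifts (ws1 @ ws2))"
                by (simp add: h' R L2 lifts_append wrap_append m_def)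
              have U: "unf ?t (ws1 @ ws2) = unf t ws"
                using unf_wd[of t ws1 ws2 w] by (simp add: ws li m_def)
              have MM: "M ?t (ws1 @ ws2) + {#(occ i t, w)#} = M t ws"
                using M_wd[of t ws1 ws2 w] by (simp add: ws li m_def)
              have "(M ?t (ws1 @ ws2) + {#}, M ?t (ws1 @ ws2) + {#(occ i t, w)#}) \<in> mult eord"
                by (rule one_step_implies_mult) auto
              then have "(M ?t (ws1 @ ws2), X) \<in> mult eord" using MM MX by simp
              then show ?thesis using inner[of ?t "ws1 @ ws2" vs] U S snw1 snw2 Y h'' by auto
            next
              case (rc B')
              let ?A3 = "map (lift 0 ^^ Suc (Suc m)) (lifts ws1)"
              have rl: "lift 1 (wrap t L1) = wrap (lift (Suc i) t) ?A3"
                using wrap_lift1[of t m ws1] by (simp add: L1 li)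
              have cond: "\<forall>j<length ?A3. occ (0 + (length ?A3 - Suc j)) (?A3 ! j) = 0"
                by (auto simp: lifts_nth occ_liftpow liftpow_add simp del: funpow.simps(2))
              from repl_wrap_inv[OF rc(3)[unfolded rl] cond] obtain t' where
                t': "B' = wrap t' ?A3" "repl i (Suc i) (lift (Suc i) t) t'" by (auto simp: li)
              have o0: "occ 0 (wrap t L1) = occ i t" by (simp add: occ_wrap L1 li occw_lifts del: funpow.simps(2))
              have o1: "occ 0 B' = occ i t'" by (simp add: occ_wrap t'(1) li occw_lifts del: funpow.simps(2))
              have o2: "occ 1 B' = occ (Suc i) t'" by (simp add: occ_wrap t'(1) li occw_lifts del: funpow.simps(2))
              have sum: "occ i t' + occ (Suc i) t' = occ i t"
                using repl_occ_sum[OF t'(2)] by (simp add: occ_lift)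
              have p: "occ i t' < occ i t" and q: "occ (Suc i) t' < occ i t"
                using sum rc(4,5) o1 o2 by auto
              have h'': "h' = wrap t' (lifts (ws1 @ w # w # ws2))"
                by (simp add: h' rc(1) t'(1) a L2 lifts_append wrap_append m_def)
              have U: "unf t' (ws1 @ w # w # ws2) = unf t ws"
                using unf_c[OF t'(2), of ws1 w ws2] by (simp add: ws li)
              from M_c[OF t'(2), of ws1 w ws2] obtain I where
                I: "M t ws = I + {#(occ i t, w)#}" "M t' (ws1 @ w # w # ws2) = I + {#(occ i t', w), (occ (Suc i) t', w)#}"
                by (auto simp: ws li)
              have "(M t' (ws1 @ w # w # ws2), X) \<in> mult eord"
                unfolding MX[symmetric] I
                by (rule one_step_implies_mult) (use p q in \<open>auto simp: eord_def\<close>)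
              then show ?thesis using inner[of t' "ws1 @ w # w # ws2" vs] U S snw1 snw2 snw0 Y h'' by auto
            qed
          qed
        next
          fix j v' assume j: "j < length vs" "lj (vs ! j) v'" and Y: "Y = apps (wrap t (lifts ws)) (vs[j := v'])"
          have "lj S (apps (unf t ws) (vs[j := v']))" unfolding S by (rule lj_apps_arg[OF j])
          then show "sn Y" using outer snw Y by auto
        next
          fix s L v vs0 assume vs: "vs = v # vs0" and W: "wrap t (lifts ws) = wrap (Lam s) L"
            and Y: "Y = apps (wrap (Sub s ((lift 0 ^^ length L) v)) L) vs0"
          from wrap_Lam_eq[OF W[symmetric]] obtain L0 where L0: "L = L0 @ lifts ws" "t = wrap (Lam s) L0" by blast
          let ?t = "wrap (Sub s ((lift 0 ^^ (length L0 + length ws)) v)) L0"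
          have Y': "Y = apps (wrap ?t (lifts ws)) vs0" by (simp add: Y L0 wrap_append)
          have e: "psubst ((lift 0 ^^ (length L0 + length ws)) v) (upn (length L0) (rho ws)) = (lift 0 ^^ length L0) v"
            by (simp only: liftpow_add[symmetric] psubst_liftpow psubst_liftpow_rho)
          have "lj (App (unf t ws) v) (unf ?t ws)"
            unfolding unf_def L0(2) psubst_wrap
            using lj.dB[of "psubst s (up (upn (length L0) (rho ws)))" "wsub L0 (rho ws)" v]
            by (simp add: e)
          then have "lj S (apps (unf ?t ws) vs0)" unfolding S vs by (simp add: lj_apps_head)
          then show "sn Y" using outer snw Y' by auto
        qed
      qed
    qed
  qed
  then show ?case by blast
qed

lemma G: "(\<forall>w\<in>set ws. sn w) \<Longrightarrow> sn (apps (unf t ws) vs) \<Longrightarrow> sn (apps (wrap t (lifts ws)) vs)"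
  using G_aux[OF sn_trancl] by blast



lemma lj_Var_False: "lj (Var x) X \<Longrightarrow> False"
  using lj_Var_inv by blast

lemma unf_single: "unf b [u] = subst b 0 u"
  unfolding unf_def subst_psubst by (rule arg_cong[where f="psubst b"]) (auto simp: fun_eq_iff rho_def)

lemma R_aux:
  assumes "Wellfounded.accp (\<lambda>y x. lj\<^sup>+\<^sup>+ x y) S"
  shows "\<forall>b u vs. S = apps (subst b 0 u) vs \<longrightarrow> sn S \<longrightarrow> sn u \<longrightarrow> sn (apps (App (Lam b) u) vs)"
  using assms
proof (induction rule: accp.induct)
  case (accI S)
  have outer: "\<And>b u vs. lj\<^sup>+\<^sup>+ S (apps (subst b 0 u) vs) \<Longrightarrow> sn S \<Longrightarrow> sn u \<Longrightarrow> sn (apps (App (Lam b) u) vs)"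
  proof -
    fix b u vs assume h: "lj\<^sup>+\<^sup>+ S (apps (subst b 0 u) vs)" and snS: "sn S" and snu: "sn u"
    have "sn (apps (subst b 0 u) vs)" by (rule sn_steps[OF tranclp_into_rtranclp[OF h] snS])
    then show "sn (apps (App (Lam b) u) vs)" using accI.IH[OF h] snu by blast
  qed
  have main: "sn u \<Longrightarrow> \<forall>b vs. S = apps (subst b 0 u) vs \<longrightarrow> sn S \<longrightarrow> sn (apps (App (Lam b) u) vs)" for u
    unfolding sn_def[of u]
  proof (induction u rule: accp.induct)
    case (accI u)
    show ?case
    proof (intro allI impI)
      fix b vs assume S: "S = apps (subst b 0 u) vs" and snS: "sn S"
      have snu: "sn u" unfolding sn_def using accI.hyps by (rule accp.intros)
      show "sn (apps (App (Lam b) u) vs)"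
      proof (rule sn_intro)
        fix Y assume "lj (apps (App (Lam b) u) vs) Y"
        from lj_apps_inv[OF this] show "sn Y"
        proof (elim disjE exE conjE)
          fix h' assume hs: "lj (App (Lam b) u) h'" and Y: "Y = apps h' vs"
          from lj_App_inv[OF hs] show "sn Y"
          proof (elim disjE exE conjE)
            fix t' assume "lj (Lam b) t'" "h' = App t' u"
            then obtain b' where b': "lj b b'" "h' = App (Lam b') u" using lj_Lam_inv by blast
            have "lj S (apps (subst b' 0 u) vs)" unfolding S by (intro lj_apps_head lj_subst b'(1))
            then have "sn (apps (App (Lam b') u) vs)" by (intro outer tranclp.r_into_trancl snS snu)
            then show "sn Y" using Y b'(2) by simp
          next
            fix u' assume u': "lj u u'" "h' = App (Lam b) u'"
            have snu': "sn u'" using sn_step[OF snu u'(1)] .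
            have "lj\<^sup>*\<^sup>* S (apps (subst b 0 u') vs)"
              unfolding S subst_psubst
              by (intro ljs_apps_head ljs_psubst_arg) (use u'(1) in auto)
            then consider "S = apps (subst b 0 u') vs" | "lj\<^sup>+\<^sup>+ S (apps (subst b 0 u') vs)" by (auto dest: rtranclpD)
            then show "sn Y"
            proof cases
              case 1
              have "\<forall>b vs. S = apps (subst b 0 u') vs \<longrightarrow> sn S \<longrightarrow> sn (apps (App (Lam b) u') vs)"
                using accI.IH[of u'] u'(1) by blast
              then have "sn (apps (App (Lam b) u') vs)" using 1 snS by blast
              then show ?thesis using Y u'(2) by simp
            next
              case 2
              then have "sn (apps (App (Lam b) u') vs)" by (intro outer snS snu')
              then show ?thesis using Y u'(2) by simp
            qed
          next
            fix s L assume "Lam b = wrap (Lam s) L" "h' = wrap (Sub s ((lift 0 ^^ length L) u)) L"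
            then have "L = [] \<and> s = b" using wrap_Lam_cases[of s L b] by metis
            then have "h' = Sub b u" using \<open>h' = wrap (Sub s ((lift 0 ^^ length L) u)) L\<close> by simp
            then have "Y = apps (wrap b (lifts [u])) vs" using Y by simp
            moreover have "sn (apps (unf b [u]) vs)" using snS S by (simp add: unf_single)
            ultimately show "sn Y" using G[of "[u]" b vs] snu by simp
          qed
        next
          fix j v' assume j: "j < length vs" "lj (vs ! j) v'" and Y: "Y = apps (App (Lam b) u) (vs[j := v'])"
          have "lj S (apps (subst b 0 u) (vs[j := v']))" unfolding S by (rule lj_apps_arg[OF j])
          then have "sn (apps (App (Lam b) u) (vs[j := v']))" by (intro outer tranclp.r_into_trancl snS snu)
          then show "sn Y" using Y by simp
        next
          fix s L v vs0 assume "App (Lam b) u = wrap (Lam s) L"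
          then show "sn Y" using wrap_not_App by metis
        qed
      qed
    qed
  qed
  show ?case
  proof (intro allI impI)
    fix b u vs assume "S = apps (subst b 0 u) vs" "sn S" "sn u"
    then show "sn (apps (App (Lam b) u) vs)" using main[of u] by blast
  qed
qed

lemma R: "sn u \<Longrightarrow> sn (apps (subst b 0 u) vs) \<Longrightarrow> sn (apps (App (Lam b) u) vs)"
proof -
  assume a: "sn u" "sn (apps (subst b 0 u) vs)"
  show ?thesis using R_aux[OF sn_trancl[OF a(2)], rule_format, OF refl a(2) a(1)] .
qed

lemma sn_Lam: "sn b \<Longrightarrow> sn (Lam b)"
  unfolding sn_def
proof (induction rule: accp.induct)
  case (accI b)
  show ?case
  proof (rule accp.intros)
    fix y assume "lj (Lam b) y"
    then obtain b' where "lj b b'" "y = Lam b'" using lj_Lam_inv by blast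
    then show "Wellfounded.accp (\<lambda>y x. lj x y) y" using accI.IH by blast
  qed
qed

inductive vspine :: "trm \<Rightarrow> bool" where
  "vspine (Var x)"
| "vspine h \<Longrightarrow> vspine (App h v)"

lemma wrap_Lam_not_Var: "wrap (Lam s) L \<noteq> Var x"
  by (cases L rule: rev_exhaust) (auto simp: wrap_snoc)

lemma vspine_not_wrap: "vspine h \<Longrightarrow> h \<noteq> wrap (Lam s) L"
proof (induction rule: vspine.induct)
  case (1 x) show ?case using wrap_Lam_not_Var[of s L x] by auto
next
  case (2 h v) show ?case using wrap_not_App[of s L h v] by auto
qed

lemma vspine_step: "vspine h \<Longrightarrow> lj h h' \<Longrightarrow> vspine h'"
proof (induction arbitrary: h' rule: vspine.induct)
  case (1 x) then show ?case using lj_Var_inv by blast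
next
  case (2 h v)
  from lj_App_inv[OF 2(3)] show ?case using 2 vspine_not_wrap by (auto intro: vspine.intros)
qed

lemma sn_vspine_App_aux:
  assumes "Wellfounded.accp (\<lambda>y x. lj x y) h"
  shows "\<forall>v. vspine h \<longrightarrow> Wellfounded.accp (\<lambda>y x. lj x y) v \<longrightarrow> sn (App h v)"
  using assms
proof (induction rule: accp.induct)
  case (accI h)
  note outerIH = accI.IH
  show ?case
  proof (intro allI impI)
    fix v assume vh: "vspine h" and av: "Wellfounded.accp (\<lambda>y x. lj x y) v"
    from av show "sn (App h v)"
    proof (induction rule: accp.induct)
      case (accI v)
      show ?case
      proof (rule sn_intro)
        fix Y assume "lj (App h v) Y"
        from lj_App_inv[OF this] show "sn Y"
        proof (elim disjE exE conjE)
          fix h' assume h': "lj h h'" "Y = App h' v"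
          have "Wellfounded.accp (\<lambda>y x. lj x y) v" using accI.hyps by (rule accp.intros)
          then show "sn Y" using outerIH[OF h'(1)] h'(2) vspine_step[OF vh h'(1)] by blast
        next
          fix v' assume "lj v v'" "Y = App h v'"
          then show "sn Y" using accI.IH by auto
        next
          fix s L assume "h = wrap (Lam s) L" then show "sn Y" using vspine_not_wrap vh by blast
        qed
      qed
    qed
  qed
qed

lemma sn_vspine_App: "vspine h \<Longrightarrow> sn h \<Longrightarrow> sn v \<Longrightarrow> sn (App h v)"
  using sn_vspine_App_aux unfolding sn_def by blast

lemma vspine_apps: "vspine (apps (Var x) vs)"
  by (induction vs rule: rev_induct) (auto simp: apps_snoc intro: vspine.intros)

lemma sn_apps_Var: "(\<forall>v\<in>set vs. sn v) \<Longrightarrow> sn (apps (Var x) vs)"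
proof (induction vs rule: rev_induct)
  case Nil then show ?case by (auto intro: sn_intro dest: lj_Var_False)
next
  case (snoc v vs) then show ?case by (auto simp: apps_snoc intro: sn_vspine_App vspine_apps)
qed



lemma is_lam_lift: "is_lam t \<Longrightarrow> is_lam (lift k t)"
  by (induction t arbitrary: k) auto

lemma is_lam_subst: "is_lam t \<Longrightarrow> is_lam u \<Longrightarrow> is_lam (subst t k u)"
  by (induction t arbitrary: k u) (auto simp: is_lam_lift)

lemma is_lam_beta: "beta t t' \<Longrightarrow> is_lam t \<Longrightarrow> is_lam t'"
  by (induction rule: beta.induct) (auto simp: is_lam_subst)

definition immsub :: "trm \<Rightarrow> trm \<Rightarrow> bool" where
  "immsub a b \<longleftrightarrow> b = Lam a \<or> (\<exists>c. b = App a c) \<or> (\<exists>c. b = App c a)"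

lemma is_lam_sub: "immsub\<^sup>*\<^sup>* s t \<Longrightarrow> is_lam t \<Longrightarrow> is_lam s"
  by (induction rule: converse_rtranclp_induct) (auto simp: immsub_def)

lemma beta_sub: "immsub\<^sup>*\<^sup>* s t \<Longrightarrow> beta s s' \<Longrightarrow> \<exists>t'. beta t t' \<and> immsub\<^sup>*\<^sup>* s' t'"
proof (induction rule: rtranclp_induct)
  case base then show ?case by auto
next
  case (step y z)
  then obtain y' where y': "beta y y'" "immsub\<^sup>*\<^sup>* s' y'" by blast
  from step(2) consider "z = Lam y" | c where "z = App y c" | c where "z = App c y" unfolding immsub_def by blast
  then show ?case
  proof cases
    case 1
    have "immsub y' (Lam y')" by (simp add: immsub_def)
    then show ?thesis using 1 y' by (blast intro: beta.lam rtranclp.rtrancl_into_rtrancl)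
  next
    case (2 c)
    have "immsub y' (App y' c)" by (simp add: immsub_def)
    then show ?thesis using 2 y' by (blast intro: beta.appL rtranclp.rtrancl_into_rtrancl)
  next
    case (3 c)
    have "immsub y' (App c y')" by (simp add: immsub_def)
    then show ?thesis using 3 y' by (blast intro: beta.appR rtranclp.rtrancl_into_rtrancl)
  qed
qed

lemma beta_apps_head: "beta h h' \<Longrightarrow> beta (apps h vs) (apps h' vs)"
  by (induction vs arbitrary: h h') (auto intro: beta.appL)

lemma spine: "\<exists>h vs. s = apps h vs \<and> (\<forall>a b. h \<noteq> App a b)"
proof (induction s)
  case (App s1 s2)
  then obtain h vs where "s1 = apps h vs" "\<forall>a b. h \<noteq> App a b" by blast
  then show ?case by (intro exI[of _ h] exI[of _ "vs @ [s2]"]) (simp add: apps_snoc)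
next
  case (Var x) show ?case by (intro exI[of _ "Var x"] exI[of _ "[]"]) simp
next
  case (Lam t) show ?case by (intro exI[of _ "Lam t"] exI[of _ "[]"]) simp
next
  case (Sub t u) show ?case by (intro exI[of _ "Sub t u"] exI[of _ "[]"]) simp
qed

lemma apps_sub: "immsub\<^sup>*\<^sup>* h (apps h vs) \<and> size h \<le> size (apps h vs) \<and>
   (\<forall>v\<in>set vs. immsub\<^sup>*\<^sup>* v (apps h vs) \<and> size v < size (apps h vs))"
proof (induction vs rule: rev_induct)
  case Nil then show ?case by simp
next
  case (snoc v vs)
  have i1: "immsub (apps h vs) (App (apps h vs) v)" and i2: "immsub v (App (apps h vs) v)"
    by (auto simp: immsub_def)
  show ?case using snoc i1 i2 by (auto simp: apps_snoc intro: rtranclp.rtrancl_into_rtrancl)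
qed

lemma is_lam_apps: "is_lam (apps h vs) \<Longrightarrow> is_lam h"
  by (induction vs rule: rev_induct) (auto simp: apps_snoc)

lemma main_aux:
  assumes "Wellfounded.accp (\<lambda>y x. beta x y) t"
  shows "is_lam t \<Longrightarrow> immsub\<^sup>*\<^sup>* s t \<Longrightarrow> sn s"
  using assms
proof (induction arbitrary: s rule: accp.induct)
  case (accI t)
  note tIH = accI.IH
  have lt: "is_lam t" by fact
  from accI.prems(2) show "sn s"
  proof (induction s rule: measure_induct_rule[of size])
    case (less s)
    have ls: "is_lam s" using is_lam_sub[OF less.prems lt] .
    obtain h vs where s: "s = apps h vs" and hna: "\<forall>a b. h \<noteq> App a b" using spine by blast
    have subv: "immsub\<^sup>*\<^sup>* v t \<and> size v < size s" if "v \<in> set vs" for v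
      using apps_sub[of h vs] that less.prems s by (auto intro: rtranclp_trans)
    have snv: "sn v" if "v \<in> set vs" for v using subv[OF that] less.IH by blast
    have lh: "is_lam h" using ls s is_lam_apps by blast
    show "sn s"
    proof (cases h)
      case (Var x) then show ?thesis using s snv sn_apps_Var by blast
    next
      case (Lam b)
      show ?thesis
      proof (cases vs)
        case Nil
        have "immsub b (Lam b)" by (simp add: immsub_def)
        then have "immsub\<^sup>*\<^sup>* b t" using less.prems s Nil Lam by (auto intro: converse_rtranclp_into_rtranclp)
        moreover have "size b < size s" using s Nil Lam by simp
        ultimately have "sn b" using less.IH by blast
        then show ?thesis using s Nil Lam sn_Lam by simp
      next
        case (Cons u vs0)
        have snu: "sn u" using snv Cons by simp
        have "beta s (apps (subst b 0 u) vs0)" using s Lam Cons by (simp add: beta_apps_head beta.root)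
        from beta_sub[OF less.prems this] obtain t' where t': "beta t t'" "immsub\<^sup>*\<^sup>* (apps (subst b 0 u) vs0) t'" by blast
        have "is_lam t'" using is_lam_beta[OF t'(1) lt] .
        then have "sn (apps (subst b 0 u) vs0)" using tIH[OF t'(1)] t'(2) by blast
        then show ?thesis using R[OF snu] s Lam Cons by simp
      qed
    next
      case (App a c) then show ?thesis using hna by blast
    next
      case (Sub a c) then show ?thesis using lh by simp
    qed
  qed
qed

theorem corollary20:
  assumes "is_lam t" and "SN beta t"
  shows "SN lj t"
  using main_aux[OF SN_accp[OF assms(2)] assms(1) rtranclp.rtrancl_refl] sn_SN by blast


end
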